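(* Let $\mathcal{H}$ be a finite-dimensional Hilbert space, $\mathcal{O}\in\mathcal{L}(\mathcal{H})$ Hermitian, $\rho$ a quantum state on $\mathcal{H}$, $n\geq 1$ and $1\leq k\leq n$. Let \[\mathcal{O}_k=\frac{1}{n!}\sum_{\pi\in\mathfrak{S}_n}U_\pi\,U_{s_k}\,(\mathcal{O}\otimes I^{\otimes n-1})\,U_\pi^\dagger,\qquad T_k=\frac{1}{2\lfloor n/k\rfloor}\sum_{i=0}^{\lfloor n/k\rfloor-1}\left(A_i+A_i^\dagger\right),\] where $A_i=U_{s_{J_i}}\,\big(I^{\otimes ik}\otimes\mathcal{O}\otimes I^{\otimes n-ik-1}\big)$ and $J_i=(ik+1,ik+2,\ldots,ik+k)$. Then $\mathbf{Var}[\mathcal{O}_k]\leq\mathbf{Var}[T_k]$.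
   Context: $\mathfrak{S}_n$ is the symmetric group on $\{1,\ldots,n\}$; for $\pi\in\mathfrak{S}_n$, $U_\pi$ is the unitary on $\mathcal{H}^{\otimes n}$ with $U_\pi\ket{\psi_1}\cdots\ket{\psi_n}=\ket{\psi_{\pi^{-1}(1)}}\cdots\ket{\psi_{\pi^{-1}(n)}}$. $s_k$ is the cyclic shift on the first $k$ elements ($s_k(i)=i+1$ for $i<k$, $s_k(k)=1$, $s_k(i)=i$ for $i>k$). For a sequence $J=(j_1,\ldots,j_l)$ of distinct elements of $\{1,\ldots,n\}$, $s_J\in\mathfrak{S}_n$ maps $j_t\mapsto j_{t+1}$ for $t<l$, $j_l\mapsto j_1$, and fixes all other elements. For a Hermitian $\mathcal{Q}$ on $\mathcal{H}^{\otimes n}$, $\mathbf{Var}[\mathcal{Q}]=\operatorname{tr}(\mathcal{Q}^2\rho^{\otimes n})-\operatorname{tr}(\mathcal{Q}\rho^{\otimes n})^2$, the variance of the outcome of measuring $\rho^{\otimes n}$ with observable $\mathcal{Q}$. *)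

theory Defs
  imports Complex_Main "HOL-Library.FuncSet" "HOL-Combinatorics.Combinatorics"
begin

text \<open>The Hilbert space H is modelled as C^d (basis indices 0..<d).  The n-fold tensor
power H^(tensor n) has orthonormal basis indexed by the tuples x : {0..<n} -> {0..<d}
(extensional functions).  Operators are represented by their matrix entries
A x y = <e_x, A e_y>.  Tensor positions are 0-based (paper position j is position j-1 here).\<close>

type_synonym op = "(nat \<Rightarrow> nat) \<Rightarrow> (nat \<Rightarrow> nat) \<Rightarrow> complex"

definition idx :: "nat \<Rightarrow> nat \<Rightarrow> (nat \<Rightarrow> nat) set" where
  "idx n d = Pi\<^sub>E {..<n} (\<lambda>_. {..<d})"

definition mmul :: "nat \<Rightarrow> nat \<Rightarrow> op \<Rightarrow> op \<Rightarrow> op" where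
  "mmul n d A B = (\<lambda>x y. \<Sum>z\<in>idx n d. A x z * B z y)"

definition adj :: "op \<Rightarrow> op" where
  "adj A = (\<lambda>x y. cnj (A y x))"

definition tr :: "nat \<Rightarrow> nat \<Rightarrow> op \<Rightarrow> complex" where
  "tr n d A = (\<Sum>x\<in>idx n d. A x x)"

text \<open>U_pi e_y = e_(y o pi^-1), i.e. U_pi (psi_1 ... psi_n) = psi_(pi^-1 1) ... psi_(pi^-1 n).\<close>
definition Uperm :: "nat \<Rightarrow> (nat \<Rightarrow> nat) \<Rightarrow> op" where
  "Uperm n \<pi> = (\<lambda>x y. if (\<forall>i<n. x i = y (inv \<pi> i)) then 1 else 0)"

text \<open>I^(tensor p) (tensor) Obs (tensor) I^(tensor n-p-1), Obs a d x d matrix.\<close>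
definition embed :: "nat \<Rightarrow> nat \<Rightarrow> (nat \<Rightarrow> nat \<Rightarrow> complex) \<Rightarrow> op" where
  "embed n p Obs = (\<lambda>x y. Obs (x p) (y p) *
      (\<Prod>i\<in>{..<n} - {p}. if x i = y i then 1 else 0))"

definition tensor_pow :: "nat \<Rightarrow> (nat \<Rightarrow> nat \<Rightarrow> complex) \<Rightarrow> op" where
  "tensor_pow n \<rho> = (\<lambda>x y. \<Prod>i<n. \<rho> (x i) (y i))"

definition hermitian :: "nat \<Rightarrow> (nat \<Rightarrow> nat \<Rightarrow> complex) \<Rightarrow> bool" where
  "hermitian d Obs \<longleftrightarrow> (\<forall>i<d. \<forall>j<d. Obs i j = cnj (Obs j i))"

definition density :: "nat \<Rightarrow> (nat \<Rightarrow> nat \<Rightarrow> complex) \<Rightarrow> bool" where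
  "density d \<rho> \<longleftrightarrow> hermitian d \<rho>
     \<and> (\<forall>v :: nat \<Rightarrow> complex. 0 \<le> Re (\<Sum>i<d. \<Sum>j<d. cnj (v i) * \<rho> i j * v j))
     \<and> (\<Sum>i<d. \<rho> i i) = 1"

text \<open>Var[Q] = tr(Q^2 rho^(tensor n)) - tr(Q rho^(tensor n))^2 (real for Hermitian Q).\<close>
definition Var :: "nat \<Rightarrow> nat \<Rightarrow> (nat \<Rightarrow> nat \<Rightarrow> complex) \<Rightarrow> op \<Rightarrow> real" where
  "Var n d \<rho> Q = Re (tr n d (mmul n d (mmul n d Q Q) (tensor_pow n \<rho>)))
      - (Re (tr n d (mmul n d Q (tensor_pow n \<rho>))))\<^sup>2"

text \<open>s_k = cyclic shift of the first k positions; s_J = cycle_of_list J.\<close>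
definition O_k :: "nat \<Rightarrow> nat \<Rightarrow> nat \<Rightarrow> (nat \<Rightarrow> nat \<Rightarrow> complex) \<Rightarrow> op" where
  "O_k n d k Obs = (\<lambda>x y. (1 / of_nat (fact n)) *
     (\<Sum>\<pi>\<in>{\<pi>. \<pi> permutes {..<n}}.
        mmul n d (mmul n d (Uperm n \<pi>)
                     (mmul n d (Uperm n (cycle_of_list [0..<k])) (embed n 0 Obs)))
                 (adj (Uperm n \<pi>)) x y))"

definition A_i :: "nat \<Rightarrow> nat \<Rightarrow> nat \<Rightarrow> (nat \<Rightarrow> nat \<Rightarrow> complex) \<Rightarrow> nat \<Rightarrow> op" where
  "A_i n d k Obs i = mmul n d (Uperm n (cycle_of_list [i*k..<i*k+k])) (embed n (i*k) Obs)"

definition T_k :: "nat \<Rightarrow> nat \<Rightarrow> nat \<Rightarrow> (nat \<Rightarrow> nat \<Rightarrow> complex) \<Rightarrow> op" where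
  "T_k n d k Obs = (\<lambda>x y. (1 / (2 * of_nat (n div k))) *
     (\<Sum>i<n div k. A_i n d k Obs i x y + adj (A_i n d k Obs i) x y))"

end

theory Submission
  imports Defs
begin

lemma finite_idx[simp]: "finite (idx n d)"
  unfolding idx_def by (simp add: finite_PiE)

lemma comp_perm_idx:
  assumes "x \<in> idx n d" "\<pi> permutes {..<n}"
  shows "x \<circ> \<pi> \<in> idx n d"
proof -
  have "\<And>i. i < n \<Longrightarrow> \<pi> i < n" using permutes_in_image[OF assms(2)] by simp
  moreover have "\<And>i. \<not> i < n \<Longrightarrow> \<pi> i = i" using assms(2) by (simp add: permutes_not_in)
  ultimately show ?thesis using assms(1) unfolding idx_def
    by (auto simp: PiE_def extensional_def Pi_def)
qed

lemma comp_perm_inv: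
  assumes "\<pi> permutes {..<n}"
  shows "x \<circ> \<pi> \<circ> inv \<pi> = x" "x \<circ> inv \<pi> \<circ> \<pi> = x"
proof -
  have "x \<circ> \<pi> \<circ> inv \<pi> = x \<circ> (\<pi> \<circ> inv \<pi>)" "x \<circ> inv \<pi> \<circ> \<pi> = x \<circ> (inv \<pi> \<circ> \<pi>)"
    by (simp_all add: comp_assoc)
  then show "x \<circ> \<pi> \<circ> inv \<pi> = x" "x \<circ> inv \<pi> \<circ> \<pi> = x"
    using permutes_inv_o[OF assms] by simp_all
qed

lemma sum_idx_reindex:
  assumes "\<pi> permutes {..<n}"
  shows "(\<Sum>x\<in>idx n d. G (x \<circ> \<pi>)) = (\<Sum>x\<in>idx n d. G x)"
proof (rule sum.reindex_bij_witness[where i="\<lambda>x. x \<circ> inv \<pi>" and j="\<lambda>x. x \<circ> \<pi>"])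
  have ip: "inv \<pi> permutes {..<n}" using assms by (rule permutes_inv)
  fix a assume "a \<in> idx n d"
  show "a \<circ> \<pi> \<circ> inv \<pi> = a" by (rule comp_perm_inv(1)[OF assms])
  show "a \<circ> inv \<pi> \<circ> \<pi> = a" by (rule comp_perm_inv(2)[OF assms])
  show "a \<circ> inv \<pi> \<in> idx n d" using comp_perm_idx[OF \<open>a \<in> idx n d\<close> ip] .
  show "a \<circ> \<pi> \<in> idx n d" using comp_perm_idx[OF \<open>a \<in> idx n d\<close> assms] .
  show "G (a \<circ> \<pi>) = G (a \<circ> \<pi>)" ..
qed

lemma Uperm_iff:
  assumes "\<pi> permutes {..<n}" "x \<in> idx n d" "z \<in> idx n d"
  shows "(\<forall>i<n. x i = z (inv \<pi> i)) \<longleftrightarrow> z = x \<circ> \<pi>"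
proof
  assume H: "\<forall>i<n. x i = z (inv \<pi> i)"
  show "z = x \<circ> \<pi>"
  proof
    fix j show "z j = (x \<circ> \<pi>) j"
    proof (cases "j < n")
      case True
      then have "\<pi> j < n" using permutes_in_image[OF assms(1)] by simp
      then have "x (\<pi> j) = z (inv \<pi> (\<pi> j))" using H by blast
      then show ?thesis using permutes_inverses(2)[OF assms(1)] by simp
    next
      case False
      then have "\<pi> j = j" using assms(1) by (simp add: permutes_not_in)
      then show ?thesis using False assms(2,3) unfolding idx_def by (auto simp: PiE_def extensional_def)
    qed
  qed
next
  assume "z = x \<circ> \<pi>"
  then show "\<forall>i<n. x i = z (inv \<pi> i)" using permutes_inverses(1)[OF assms(1)] by simp
qed

lemma Uperm_mul:
  assumes "\<pi> permutes {..<n}" "x \<in> idx n d"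
  shows "mmul n d (Uperm n \<pi>) A x y = A (x \<circ> \<pi>) y"
proof -
  have "mmul n d (Uperm n \<pi>) A x y = (\<Sum>z\<in>idx n d. if z = x \<circ> \<pi> then A z y else 0)"
    unfolding mmul_def Uperm_def
    by (rule sum.cong) (auto simp: Uperm_iff[OF assms])
  also have "\<dots> = A (x \<circ> \<pi>) y" using comp_perm_idx[OF assms(2,1)] by (simp add: sum.delta')
  finally show ?thesis .
qed

lemma mul_adjU:
  assumes "\<pi> permutes {..<n}" "y \<in> idx n d"
  shows "mmul n d A (adj (Uperm n \<pi>)) x y = A x (y \<circ> \<pi>)"
proof -
  have "mmul n d A (adj (Uperm n \<pi>)) x y = (\<Sum>z\<in>idx n d. if z = y \<circ> \<pi> then A x z else 0)"
    unfolding mmul_def Uperm_def adj_def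
    by (rule sum.cong) (auto simp: Uperm_iff[OF assms])
  also have "\<dots> = A x (y \<circ> \<pi>)" using comp_perm_idx[OF assms(2,1)] by (simp add: sum.delta')
  finally show ?thesis .
qed

lemma embed_conj:
  assumes "\<tau> permutes {..<n}" "p < n"
  shows "embed n p Obs (u \<circ> \<tau>) (v \<circ> \<tau>) = embed n (\<tau> p) Obs u v"
proof -
  have b: "bij_betw \<tau> ({..<n} - {p}) ({..<n} - {\<tau> p})"
  proof -
    have "bij_betw \<tau> {..<n} {..<n}" using assms(1) by (rule permutes_imp_bij)
    then show ?thesis using assms(2) permutes_in_image[OF assms(1), of p] by (intro bij_betw_DiffI) auto
  qed
  have "(\<Prod>i\<in>{..<n} - {p}. if u (\<tau> i) = v (\<tau> i) then 1 else 0)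
      = (\<Prod>i\<in>{..<n} - {\<tau> p}. if u i = v i then (1::complex) else 0)"
    by (rule prod.reindex_bij_betw[OF b, of "\<lambda>i. if u i = v i then (1::complex) else 0"])
  then show ?thesis unfolding embed_def comp_def by (rule arg_cong)
qed

lemma embed_cnj:
  assumes "hermitian d Obs" "u \<in> idx n d" "v \<in> idx n d" "p < n"
  shows "cnj (embed n p Obs u v) = embed n p Obs v u"
proof -
  have "u p < d" "v p < d" using assms(2-4) unfolding idx_def by (auto dest: PiE_mem)
  then have 1: "cnj (Obs (u p) (v p)) = Obs (v p) (u p)"
    using assms(1) unfolding hermitian_def by (metis complex_cnj_cnj)
  have 2: "(\<Prod>i\<in>{..<n} - {p}. cnj (if u i = v i then 1 else 0))
     = (\<Prod>i\<in>{..<n} - {p}. if v i = u i then 1 else (0::complex))"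
    by (rule prod.cong) auto
  show ?thesis unfolding embed_def complex_cnj_mult cnj_prod 1 2 ..
qed


section \<open>Explicit permutations\<close>

definition cyc :: "nat \<Rightarrow> nat \<Rightarrow> nat \<Rightarrow> nat" where
  "cyc a k j = (if a \<le> j \<and> j + 1 < a + k then j + 1 else if j + 1 = a + k then a else j)"

lemma cycle_of_list_upt:
  assumes "1 \<le> k"
  shows "cycle_of_list [a..<a+k] = cyc a k"
proof
  fix j
  let ?cs = "[a..<a+k]"
  show "cycle_of_list ?cs j = cyc a k j"
  proof (cases "j \<in> set ?cs")
    case False
    then have "cycle_of_list ?cs j = j" by (rule id_outside_supp)
    moreover have "cyc a k j = j" using False assms unfolding cyc_def by auto
    ultimately show ?thesis by simp
  next
    case True
    then have "a \<le> j" "j < a + k" by auto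
    then obtain t where t: "t < k" "j = a + t" using that[of "j - a"] by (metis add_diff_inverse_nat less_diff_conv2 not_less add.commute)
    have "map (cycle_of_list ?cs) ?cs = rotate1 ?cs"
      using cyclic_rotation[of ?cs 1] by simp
    then have "map (cycle_of_list ?cs) ?cs ! t = rotate1 ?cs ! t" by simp
    then have "cycle_of_list ?cs (a + t) = ?cs ! (Suc t mod k)"
      using t by (simp add: nth_rotate1)
    also have "\<dots> = a + (Suc t mod k)" using t assms by simp
    finally have "cycle_of_list ?cs j = a + Suc t mod k" using t by simp
    moreover have "a + Suc t mod k = cyc a k j"
    proof (cases "Suc t < k")
      case True then show ?thesis using t unfolding cyc_def by simp
    next
      case False then have "Suc t = k" using t by simp
      then show ?thesis using t unfolding cyc_def by simp
    qed
    ultimately show ?thesis by simp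
  qed
qed

lemma involution_permutes:
  assumes "\<And>j. f (f j) = j" "\<And>j. j \<notin> S \<Longrightarrow> f j = j" "\<And>j. j \<in> S \<Longrightarrow> f j \<in> S"
  shows "f permutes S"
proof (rule bij_imp_permutes)
  show "bij_betw f S S"
    by (rule bij_betw_byWitness[where f'=f]) (use assms in auto)
qed (use assms in auto)

definition blk :: "nat \<Rightarrow> nat \<Rightarrow> nat \<Rightarrow> nat" where
  "blk m k j = (if j < k then m + j else if m \<le> j \<and> j < m + k then j - m else j)"

definition refl :: "nat \<Rightarrow> nat \<Rightarrow> nat" where
  "refl k j = (if 0 < j \<and> j < k then k - j else j)"

lemma blk_permutes:
  assumes "m = 0 \<or> k \<le> m" "m + k \<le> n"
  shows "blk m k permutes {..<n}"
  by (rule involution_permutes) (use assms in \<open>auto simp: blk_def\<close>)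

lemma refl_permutes:
  assumes "k \<le> n"
  shows "refl k permutes {..<n}"
  by (rule involution_permutes) (use assms in \<open>auto simp: refl_def\<close>)

lemma cyc_permutes:
  assumes "1 \<le> k" "a + k \<le> n"
  shows "cyc a k permutes {..<n}"
proof -
  have "cycle_of_list [a..<a+k] permutes set [a..<a+k]" by (rule cycle_permutes)
  then have "cyc a k permutes {a..<a+k}" using cycle_of_list_upt[OF assms(1)] by simp
  then show ?thesis by (rule permutes_subset) (use assms in auto)
qed

lemma cyc_blk:
  assumes "m = 0 \<or> k \<le> m" "1 \<le> k"
  shows "cyc m k \<circ> blk m k = blk m k \<circ> cyc 0 k"
  using assms by (auto simp: fun_eq_iff cyc_def blk_def)

lemma cyc_refl:
  assumes "1 \<le> k"
  shows "cyc 0 k \<circ> refl k \<circ> cyc 0 k = refl k"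
  using assms by (auto simp: fun_eq_iff cyc_def refl_def)

lemma blk0: "1 \<le> k \<Longrightarrow> blk m k 0 = m" by (simp add: blk_def)
lemma refl0: "refl k 0 = 0" by (simp add: refl_def)


section \<open>Symmetrisation identity\<close>

definition SymOp :: "nat \<Rightarrow> op \<Rightarrow> op" where
  "SymOp n A = (\<lambda>x y. (1 / of_nat (fact n)) *
     (\<Sum>\<pi>\<in>{\<pi>. \<pi> permutes {..<n}}. A (x \<circ> \<pi>) (y \<circ> \<pi>)))"

lemma sum_perm_reindex:
  assumes "g permutes {..<n}"
  shows "(\<Sum>\<pi>\<in>{\<pi>. \<pi> permutes {..<n}}. G (\<pi> \<circ> g)) = (\<Sum>\<pi>\<in>{\<pi>. \<pi> permutes {..<n}}. G \<pi>)"
proof (rule sum.reindex_bij_witness[where i="\<lambda>\<pi>. \<pi> \<circ> inv g" and j="\<lambda>\<pi>. \<pi> \<circ> g"])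
  have ig: "inv g permutes {..<n}" using assms by (rule permutes_inv)
  fix a assume a: "a \<in> {\<pi>. \<pi> permutes {..<n}}"
  show "a \<circ> g \<circ> inv g = a" by (rule comp_perm_inv(1)[OF assms])
  show "a \<circ> inv g \<circ> g = a" by (rule comp_perm_inv(2)[OF assms])
  show "a \<circ> inv g \<in> {\<pi>. \<pi> permutes {..<n}}" using permutes_compose[OF ig] a by simp
  show "a \<circ> g \<in> {\<pi>. \<pi> permutes {..<n}}" using permutes_compose[OF assms] a by simp
  show "G (a \<circ> g) = G (a \<circ> g)" ..
qed

context
  fixes n d k :: nat and Obs :: "nat \<Rightarrow> nat \<Rightarrow> complex"
  assumes k1: "1 \<le> k" and kn: "k \<le> n" and herm: "hermitian d Obs"
begin

definition FF :: "(nat \<Rightarrow> nat) \<Rightarrow> (nat \<Rightarrow> nat) \<Rightarrow> (nat \<Rightarrow> nat) \<Rightarrow> complex" where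
  "FF x y \<pi> = embed n 0 Obs (x \<circ> \<pi> \<circ> cyc 0 k) (y \<circ> \<pi>)"

lemma n_pos: "0 < n" using k1 kn by simp

lemma c_perm: "cyc 0 k permutes {..<n}" using cyc_permutes[of k 0 n] k1 kn by simp

lemma cyc0: "cycle_of_list [0..<k] = cyc 0 k" using cycle_of_list_upt[OF k1, of 0] by simp

lemma Ok_entry:
  assumes "x \<in> idx n d" "y \<in> idx n d" "\<pi> permutes {..<n}"
  shows "mmul n d (mmul n d (Uperm n \<pi>) (mmul n d (Uperm n (cycle_of_list [0..<k])) (embed n 0 Obs)))
            (adj (Uperm n \<pi>)) x y = FF x y \<pi>"
  using assms comp_perm_idx[OF assms(1,3)]
  by (simp add: mul_adjU Uperm_mul cyc0 c_perm FF_def)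

lemma Ok_sum:
  assumes "x \<in> idx n d" "y \<in> idx n d"
  shows "O_k n d k Obs x y = (1 / of_nat (fact n)) * (\<Sum>\<pi>\<in>{\<pi>. \<pi> permutes {..<n}}. FF x y \<pi>)"
  unfolding O_k_def using Ok_entry[OF assms] by simp

lemma blk_ok:
  assumes "i < n div k"
  shows "i * k = 0 \<or> k \<le> i * k" "i * k + k \<le> n"
proof -
  show "i * k = 0 \<or> k \<le> i * k" by (cases i) auto
  have "Suc i \<le> n div k" using assms by simp
  then have "Suc i * k \<le> n div k * k" by (rule mult_right_mono) simp
  also have "\<dots> \<le> n" by simp
  finally show "i * k + k \<le> n" by simp
qed

lemma A_entry:
  assumes "x \<in> idx n d" "y \<in> idx n d" "\<pi> permutes {..<n}" "i < n div k"
  shows "A_i n d k Obs i (x \<circ> \<pi>) (y \<circ> \<pi>) = FF x y (\<pi> \<circ> blk (i*k) k)"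
proof -
  note bo = blk_ok[OF assms(4)]
  have cp: "cyc (i*k) k permutes {..<n}" using cyc_permutes[OF k1 bo(2)] .
  have bp: "blk (i*k) k permutes {..<n}" using blk_permutes[OF bo] .
  have xp: "x \<circ> \<pi> \<in> idx n d" using comp_perm_idx[OF assms(1,3)] .
  have "A_i n d k Obs i (x \<circ> \<pi>) (y \<circ> \<pi>) = embed n (i*k) Obs (x \<circ> \<pi> \<circ> cyc (i*k) k) (y \<circ> \<pi>)"
    unfolding A_i_def cycle_of_list_upt[OF k1] using Uperm_mul[OF cp xp] by simp
  also have "\<dots> = embed n (blk (i*k) k 0) Obs (x \<circ> \<pi> \<circ> cyc (i*k) k) (y \<circ> \<pi>)"
    using blk0[OF k1] by simp
  also have "\<dots> = embed n 0 Obs (x \<circ> \<pi> \<circ> cyc (i*k) k \<circ> blk (i*k) k) (y \<circ> \<pi> \<circ> blk (i*k) k)"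
    using embed_conj[OF bp n_pos] by simp
  also have "x \<circ> \<pi> \<circ> cyc (i*k) k \<circ> blk (i*k) k = x \<circ> (\<pi> \<circ> blk (i*k) k) \<circ> cyc 0 k"
    using cyc_blk[OF bo(1) k1] by (simp add: comp_assoc)
  finally show ?thesis unfolding FF_def by (simp add: comp_def)
qed

lemma adjA_entry:
  assumes "x \<in> idx n d" "y \<in> idx n d" "\<pi> permutes {..<n}" "i < n div k"
  shows "adj (A_i n d k Obs i) (x \<circ> \<pi>) (y \<circ> \<pi>) = FF x y (\<pi> \<circ> blk (i*k) k \<circ> cyc 0 k \<circ> refl k)"
proof -
  note bo = blk_ok[OF assms(4)]
  have cp: "cyc (i*k) k permutes {..<n}" using cyc_permutes[OF k1 bo(2)] .
  have bp: "blk (i*k) k permutes {..<n}" using blk_permutes[OF bo] .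
  have rp: "refl k permutes {..<n}" using refl_permutes[OF kn] .
  have xp: "x \<circ> \<pi> \<in> idx n d" using comp_perm_idx[OF assms(1,3)] .
  have yp: "y \<circ> \<pi> \<in> idx n d" using comp_perm_idx[OF assms(2,3)] .
  have ypc: "y \<circ> \<pi> \<circ> cyc (i*k) k \<in> idx n d" using comp_perm_idx[OF yp cp] .
  have "adj (A_i n d k Obs i) (x \<circ> \<pi>) (y \<circ> \<pi>) = cnj (embed n (i*k) Obs (y \<circ> \<pi> \<circ> cyc (i*k) k) (x \<circ> \<pi>))"
    unfolding adj_def A_i_def cycle_of_list_upt[OF k1] using Uperm_mul[OF cp yp] by simp
  also have "\<dots> = embed n (i*k) Obs (x \<circ> \<pi>) (y \<circ> \<pi> \<circ> cyc (i*k) k)"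
    using embed_cnj[OF herm ypc xp] bo(2) k1 by simp
  also have "\<dots> = embed n (blk (i*k) k 0) Obs (x \<circ> \<pi>) (y \<circ> \<pi> \<circ> cyc (i*k) k)"
    using blk0[OF k1] by simp
  also have "\<dots> = embed n 0 Obs (x \<circ> \<pi> \<circ> blk (i*k) k) (y \<circ> \<pi> \<circ> cyc (i*k) k \<circ> blk (i*k) k)"
    using embed_conj[OF bp n_pos] by simp
  also have "\<dots> = embed n (refl k 0) Obs (x \<circ> \<pi> \<circ> blk (i*k) k) (y \<circ> \<pi> \<circ> cyc (i*k) k \<circ> blk (i*k) k)"
    using refl0 by simp
  also have "\<dots> = embed n 0 Obs (x \<circ> \<pi> \<circ> blk (i*k) k \<circ> refl k) (y \<circ> \<pi> \<circ> cyc (i*k) k \<circ> blk (i*k) k \<circ> refl k)"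
    using embed_conj[OF rp n_pos] by simp
  also have "x \<circ> \<pi> \<circ> blk (i*k) k \<circ> refl k = x \<circ> (\<pi> \<circ> blk (i*k) k \<circ> cyc 0 k \<circ> refl k) \<circ> cyc 0 k"
  proof -
    have "x \<circ> (\<pi> \<circ> blk (i*k) k \<circ> cyc 0 k \<circ> refl k) \<circ> cyc 0 k = x \<circ> \<pi> \<circ> blk (i*k) k \<circ> (cyc 0 k \<circ> refl k \<circ> cyc 0 k)"
      by (simp add: comp_assoc)
    then show ?thesis using cyc_refl[OF k1] by simp
  qed
  also have "y \<circ> \<pi> \<circ> cyc (i*k) k \<circ> blk (i*k) k \<circ> refl k = y \<circ> (\<pi> \<circ> blk (i*k) k \<circ> cyc 0 k \<circ> refl k)"
  proof -
    have "y \<circ> \<pi> \<circ> cyc (i*k) k \<circ> blk (i*k) k = y \<circ> \<pi> \<circ> (cyc (i*k) k \<circ> blk (i*k) k)"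
      by (simp add: comp_assoc)
    then show ?thesis using cyc_blk[OF bo(1) k1] by (simp add: comp_assoc)
  qed
  finally show ?thesis unfolding FF_def .
qed

lemma Sym_T_eq:
  assumes "x \<in> idx n d" "y \<in> idx n d"
  shows "SymOp n (T_k n d k Obs) x y = O_k n d k Obs x y"
proof -
  let ?P = "{\<pi>. \<pi> permutes {..<n}}"
  let ?m = "n div k"
  have m0: "0 < ?m" using k1 kn by (simp add: div_greater_zero_iff)
  have "(\<Sum>\<pi>\<in>?P. T_k n d k Obs (x \<circ> \<pi>) (y \<circ> \<pi>))
      = (\<Sum>\<pi>\<in>?P. (1 / (2 * of_nat ?m)) * (\<Sum>i<?m. FF x y (\<pi> \<circ> blk (i*k) k)
            + FF x y (\<pi> \<circ> blk (i*k) k \<circ> cyc 0 k \<circ> refl k)))"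
    unfolding T_k_def
    by (rule sum.cong[OF refl], rule arg_cong[where f="(*) _"], rule sum.cong[OF refl])
       (use A_entry adjA_entry assms in auto)
  also have "\<dots> = (1 / (2 * of_nat ?m)) * (\<Sum>i<?m. (\<Sum>\<pi>\<in>?P. FF x y (\<pi> \<circ> blk (i*k) k))
            + (\<Sum>\<pi>\<in>?P. FF x y (\<pi> \<circ> (blk (i*k) k \<circ> cyc 0 k \<circ> refl k))))"
    by (simp only: sum_distrib_left[symmetric] sum.swap[of _ ?P] sum.distrib comp_assoc)
  also have "\<dots> = (1 / (2 * of_nat ?m)) * (\<Sum>i<?m. 2 * (\<Sum>\<pi>\<in>?P. FF x y \<pi>))"
  proof -
    have "(\<Sum>\<pi>\<in>?P. FF x y (\<pi> \<circ> blk (i*k) k)) = (\<Sum>\<pi>\<in>?P. FF x y \<pi>)"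
      "(\<Sum>\<pi>\<in>?P. FF x y (\<pi> \<circ> (blk (i*k) k \<circ> cyc 0 k \<circ> refl k))) = (\<Sum>\<pi>\<in>?P. FF x y \<pi>)"
      if "i < ?m" for i
    proof -
      note bo = blk_ok[OF that]
      have bp: "blk (i*k) k permutes {..<n}" using blk_permutes[OF bo] .
      have g: "blk (i*k) k \<circ> cyc 0 k \<circ> refl k permutes {..<n}"
        by (intro permutes_compose bp c_perm refl_permutes kn)
      show "(\<Sum>\<pi>\<in>?P. FF x y (\<pi> \<circ> blk (i*k) k)) = (\<Sum>\<pi>\<in>?P. FF x y \<pi>)"
        by (rule sum_perm_reindex[OF bp])
      show "(\<Sum>\<pi>\<in>?P. FF x y (\<pi> \<circ> (blk (i*k) k \<circ> cyc 0 k \<circ> refl k))) = (\<Sum>\<pi>\<in>?P. FF x y \<pi>)"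
        by (rule sum_perm_reindex[OF g])
    qed
    then show ?thesis by (intro arg_cong[where f="(*) _"] sum.cong) auto
  qed
  also have "\<dots> = (\<Sum>\<pi>\<in>?P. FF x y \<pi>)" using m0 by simp
  finally show ?thesis unfolding SymOp_def using Ok_sum[OF assms] by simp
qed

end


section \<open>Variance of the symmetrisation\<close>

lemma sum4_swap:
  "(\<Sum>x\<in>A. \<Sum>y\<in>A. \<Sum>z\<in>A. \<Sum>w\<in>A. f x y z w) = (\<Sum>w\<in>A. \<Sum>z\<in>A. \<Sum>y\<in>A. \<Sum>x\<in>A. (f x y z w :: 'a::comm_monoid_add))"
proof -
  have 1: "\<And>x y. (\<Sum>z\<in>A. \<Sum>w\<in>A. f x y z w) = (\<Sum>w\<in>A. \<Sum>z\<in>A. f x y z w)" by (rule sum.swap)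
  have 2: "\<And>x. (\<Sum>y\<in>A. \<Sum>w\<in>A. \<Sum>z\<in>A. f x y z w) = (\<Sum>w\<in>A. \<Sum>y\<in>A. \<Sum>z\<in>A. f x y z w)" by (rule sum.swap)
  have 3: "(\<Sum>x\<in>A. \<Sum>w\<in>A. \<Sum>y\<in>A. \<Sum>z\<in>A. f x y z w) = (\<Sum>w\<in>A. \<Sum>x\<in>A. \<Sum>y\<in>A. \<Sum>z\<in>A. f x y z w)" by (rule sum.swap)
  have 4: "\<And>w. (\<Sum>x\<in>A. \<Sum>y\<in>A. \<Sum>z\<in>A. f x y z w) = (\<Sum>z\<in>A. \<Sum>y\<in>A. \<Sum>x\<in>A. f x y z w)"
  proof -
    fix w
    have a: "\<And>x. (\<Sum>y\<in>A. \<Sum>z\<in>A. f x y z w) = (\<Sum>z\<in>A. \<Sum>y\<in>A. f x y z w)" by (rule sum.swap)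
    have b: "(\<Sum>x\<in>A. \<Sum>z\<in>A. \<Sum>y\<in>A. f x y z w) = (\<Sum>z\<in>A. \<Sum>x\<in>A. \<Sum>y\<in>A. f x y z w)" by (rule sum.swap)
    have c: "\<And>z. (\<Sum>x\<in>A. \<Sum>y\<in>A. f x y z w) = (\<Sum>y\<in>A. \<Sum>x\<in>A. f x y z w)" by (rule sum.swap)
    show "?thesis w" by (simp only: a b c)
  qed
  show ?thesis by (simp only: 1 2 3 4)
qed

definition Bl :: "nat \<Rightarrow> nat \<Rightarrow> op \<Rightarrow> op \<Rightarrow> op \<Rightarrow> complex" where
  "Bl n d R P Q = (\<Sum>x\<in>idx n d. \<Sum>y\<in>idx n d. \<Sum>z\<in>idx n d. P x z * Q z y * R y x)"

definition Ex :: "nat \<Rightarrow> nat \<Rightarrow> op \<Rightarrow> op \<Rightarrow> complex" where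
  "Ex n d R Q = (\<Sum>x\<in>idx n d. \<Sum>y\<in>idx n d. Q x y * R y x)"

lemma tr_sq: "tr n d (mmul n d (mmul n d Q Q) R) = Bl n d R Q Q"
  unfolding tr_def mmul_def Bl_def by (simp add: sum_distrib_right)

lemma tr_1: "tr n d (mmul n d Q R) = Ex n d R Q"
  unfolding tr_def mmul_def Ex_def by simp

lemma Var_eq: "Var n d \<rho> Q = Re (Bl n d (tensor_pow n \<rho>) Q Q) - (Re (Ex n d (tensor_pow n \<rho>) Q))\<^sup>2"
  unfolding Var_def tr_sq unfolding tr_1 ..

lemma Bl_cong:
  assumes "\<And>x y. x \<in> idx n d \<Longrightarrow> y \<in> idx n d \<Longrightarrow> Q x y = Q' x y"
  shows "Bl n d R Q Q = Bl n d R Q' Q'"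
  unfolding Bl_def using assms by (intro sum.cong refl) auto

lemma Ex_cong:
  assumes "\<And>x y. x \<in> idx n d \<Longrightarrow> y \<in> idx n d \<Longrightarrow> Q x y = Q' x y"
  shows "Ex n d R Q = Ex n d R Q'"
  unfolding Ex_def using assms by (intro sum.cong refl) auto

lemma sum_pull3:
  "(\<Sum>x\<in>A. \<Sum>y\<in>A. \<Sum>z\<in>A. \<Sum>w\<in>B. f x y z w) = (\<Sum>w\<in>B. \<Sum>x\<in>A. \<Sum>y\<in>A. \<Sum>z\<in>A. (f x y z w :: 'a::comm_monoid_add))"
  by (simp only: sum.swap[where B=B])

lemma sum_pull2:
  "(\<Sum>x\<in>A. \<Sum>y\<in>A. \<Sum>w\<in>B. f x y w) = (\<Sum>w\<in>B. \<Sum>x\<in>A. \<Sum>y\<in>A. (f x y w :: 'a::comm_monoid_add))"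
  by (simp only: sum.swap[where B=B])

lemma Bl_sum_left:
  "Bl n d R (\<lambda>x y. \<Sum>\<pi>\<in>B. f \<pi> x y) Q = (\<Sum>\<pi>\<in>B. Bl n d R (f \<pi>) Q)"
  unfolding Bl_def by (simp only: sum_distrib_right sum_pull3)

lemma Bl_sum_right:
  "Bl n d R Q (\<lambda>x y. \<Sum>\<pi>\<in>B. f \<pi> x y) = (\<Sum>\<pi>\<in>B. Bl n d R Q (f \<pi>))"
  unfolding Bl_def by (simp only: sum_distrib_left sum_distrib_right sum_pull3)

lemma Bl_scal_left: "Bl n d R (\<lambda>x y. c * P x y) Q = c * Bl n d R P Q"
  unfolding Bl_def by (simp add: sum_distrib_left mult.assoc)

lemma Bl_scal_right: "Bl n d R Q (\<lambda>x y. c * P x y) = c * Bl n d R Q P"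
  unfolding Bl_def by (simp add: sum_distrib_left mult.assoc mult.left_commute)

lemma Bl_diff:
  "Bl n d R (\<lambda>x y. P x y - P' x y) (\<lambda>x y. P x y - P' x y)
    = Bl n d R P P - Bl n d R P P' - Bl n d R P' P + Bl n d R P' P'"
  unfolding Bl_def by (simp add: algebra_simps sum_subtractf sum.distrib)

lemma Ex_sum:
  "Ex n d R (\<lambda>x y. c * (\<Sum>\<pi>\<in>B. f \<pi> x y)) = c * (\<Sum>\<pi>\<in>B. Ex n d R (f \<pi>))"
  unfolding Ex_def by (simp only: sum_distrib_right sum_distrib_left sum_pull2 mult.assoc)

context
  fixes n d :: nat and R :: op and W :: op
  assumes Rinv: "\<And>\<pi> x y. \<pi> permutes {..<n} \<Longrightarrow> x \<in> idx n d \<Longrightarrow> y \<in> idx n d \<Longrightarrow> R (x \<circ> \<pi>) (y \<circ> \<pi>) = R x y"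
    and Rdec: "\<And>x y. x \<in> idx n d \<Longrightarrow> y \<in> idx n d \<Longrightarrow> R y x = (\<Sum>J\<in>idx n d. W J y * cnj (W J x))"
begin

lemma Bl_pos:
  assumes hD: "\<And>x y. x \<in> idx n d \<Longrightarrow> y \<in> idx n d \<Longrightarrow> D x y = cnj (D y x)"
  shows "0 \<le> Re (Bl n d R D D)"
proof -
  let ?N = "idx n d"
  define u where "u J z = (\<Sum>y\<in>?N. D z y * W J y)" for J z
  have "Bl n d R D D = (\<Sum>x\<in>?N. \<Sum>y\<in>?N. \<Sum>z\<in>?N. \<Sum>J\<in>?N. D x z * D z y * (W J y * cnj (W J x)))"
    unfolding Bl_def by (intro sum.cong refl) (simp add: Rdec sum_distrib_left)
  also have "\<dots> = (\<Sum>J\<in>?N. \<Sum>z\<in>?N. \<Sum>y\<in>?N. \<Sum>x\<in>?N. D x z * D z y * (W J y * cnj (W J x)))"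
    by (rule sum4_swap)
  also have "\<dots> = (\<Sum>J\<in>?N. \<Sum>z\<in>?N. u J z * cnj (u J z))"
  proof (intro sum.cong refl)
    fix J z assume z: "z \<in> ?N"
    have "u J z * cnj (u J z) = (\<Sum>y\<in>?N. D z y * W J y) * (\<Sum>x\<in>?N. D x z * cnj (W J x))"
      unfolding u_def cnj_sum complex_cnj_mult using hD z
      by (intro arg_cong[where f="(*) _"] sum.cong refl) (metis complex_cnj_cnj)
    also have "\<dots> = (\<Sum>y\<in>?N. \<Sum>x\<in>?N. D x z * D z y * (W J y * cnj (W J x)))"
      by (simp add: sum_product algebra_simps)
    finally show "(\<Sum>y\<in>?N. \<Sum>x\<in>?N. D x z * D z y * (W J y * cnj (W J x))) = u J z * cnj (u J z)" by simp
  qed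
  finally have "Re (Bl n d R D D) = (\<Sum>J\<in>?N. \<Sum>z\<in>?N. (Re (u J z))\<^sup>2 + (Im (u J z))\<^sup>2)"
    by (simp add: Re_sum complex_mult_cnj)
  also have "\<dots> \<ge> 0" by (intro sum_nonneg) auto
  finally show ?thesis .
qed

lemma Bl_perm:
  assumes p: "\<pi> permutes {..<n}"
  shows "Bl n d R (\<lambda>x y. T (x \<circ> \<pi>) (y \<circ> \<pi>)) (\<lambda>x y. T (x \<circ> \<pi>) (y \<circ> \<pi>)) = Bl n d R T T"
proof -
  let ?N = "idx n d"
  define G where "G a b c = T a c * T c b * R b a" for a b c
  have "Bl n d R (\<lambda>x y. T (x \<circ> \<pi>) (y \<circ> \<pi>)) (\<lambda>x y. T (x \<circ> \<pi>) (y \<circ> \<pi>))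
     = (\<Sum>x\<in>?N. \<Sum>y\<in>?N. \<Sum>z\<in>?N. G (x \<circ> \<pi>) (y \<circ> \<pi>) (z \<circ> \<pi>))"
    unfolding Bl_def G_def by (intro sum.cong refl) (simp add: Rinv[OF p])
  also have "\<dots> = (\<Sum>x\<in>?N. \<Sum>y\<in>?N. \<Sum>z\<in>?N. G (x \<circ> \<pi>) (y \<circ> \<pi>) z)"
    by (intro sum.cong refl sum_idx_reindex[OF p])
  also have "\<dots> = (\<Sum>x\<in>?N. \<Sum>y\<in>?N. \<Sum>z\<in>?N. G (x \<circ> \<pi>) y z)"
    by (intro sum.cong refl sum_idx_reindex[OF p, where G="\<lambda>b. \<Sum>z\<in>?N. G _ b z"])
  also have "\<dots> = (\<Sum>x\<in>?N. \<Sum>y\<in>?N. \<Sum>z\<in>?N. G x y z)"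
    by (intro sum.cong refl sum_idx_reindex[OF p, where G="\<lambda>a. \<Sum>y\<in>?N. \<Sum>z\<in>?N. G a y z"])
  finally show ?thesis unfolding Bl_def G_def .
qed

lemma Ex_perm:
  assumes p: "\<pi> permutes {..<n}"
  shows "Ex n d R (\<lambda>x y. T (x \<circ> \<pi>) (y \<circ> \<pi>)) = Ex n d R T"
proof -
  let ?N = "idx n d"
  define G where "G a b = T a b * R b a" for a b
  have "Ex n d R (\<lambda>x y. T (x \<circ> \<pi>) (y \<circ> \<pi>))
     = (\<Sum>x\<in>?N. \<Sum>y\<in>?N. G (x \<circ> \<pi>) (y \<circ> \<pi>))"
    unfolding Ex_def G_def by (intro sum.cong refl) (simp add: Rinv[OF p])
  also have "\<dots> = (\<Sum>x\<in>?N. \<Sum>y\<in>?N. G (x \<circ> \<pi>) y)"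
    by (intro sum.cong refl sum_idx_reindex[OF p])
  also have "\<dots> = (\<Sum>x\<in>?N. \<Sum>y\<in>?N. G x y)"
    by (intro sum.cong refl sum_idx_reindex[OF p, where G="\<lambda>a. \<Sum>y\<in>?N. G a y"])
  finally show ?thesis unfolding Ex_def G_def .
qed

lemma var_sym:
  assumes hT: "\<And>x y. x \<in> idx n d \<Longrightarrow> y \<in> idx n d \<Longrightarrow> T x y = cnj (T y x)"
  shows "Re (Bl n d R (SymOp n T) (SymOp n T)) - (Re (Ex n d R (SymOp n T)))\<^sup>2
         \<le> Re (Bl n d R T T) - (Re (Ex n d R T))\<^sup>2"
proof -
  let ?N = "idx n d"
  let ?P = "{\<pi>. \<pi> permutes {..<n}}"
  define c :: complex where "c = of_nat (fact n)"
  define Y :: "(nat \<Rightarrow> nat) \<Rightarrow> op" where "Y \<pi> = (\<lambda>x y. T (x \<circ> \<pi>) (y \<circ> \<pi>))" for \<pi>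
  define M where "M = SymOp n T"
  have finP: "finite ?P" by (rule finite_permutations) simp
  have cardP: "of_nat (card ?P) = c" unfolding c_def by (simp add: card_permutations)
  have c0: "c \<noteq> 0" unfolding c_def by simp
  have Mdef: "M x y = (1 / c) * (\<Sum>\<pi>\<in>?P. Y \<pi> x y)" for x y
    unfolding M_def SymOp_def c_def Y_def ..
  have sumY: "(\<lambda>x y. \<Sum>\<pi>\<in>?P. Y \<pi> x y) = (\<lambda>x y. c * M x y)"
    using c0 by (simp add: Mdef)
  have hY: "Y \<pi> x y = cnj (Y \<pi> y x)" if "\<pi> \<in> ?P" "x \<in> ?N" "y \<in> ?N" for \<pi> x y
    unfolding Y_def using that by (intro hT comp_perm_idx) auto
  have hM: "M x y = cnj (M y x)" if "x \<in> ?N" "y \<in> ?N" for x y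
  proof -
    have "cnj (M y x) = cnj (1 / c) * (\<Sum>\<pi>\<in>?P. cnj (Y \<pi> y x))" unfolding Mdef by (simp add: cnj_sum)
    also have "cnj (1 / c) = 1 / c" unfolding c_def by simp
    also have "(\<Sum>\<pi>\<in>?P. cnj (Y \<pi> y x)) = (\<Sum>\<pi>\<in>?P. Y \<pi> x y)"
      using hY that by (intro sum.cong refl) (metis complex_cnj_cnj)
    finally show ?thesis unfolding Mdef by simp
  qed
  have BlY: "Bl n d R (Y \<pi>) (Y \<pi>) = Bl n d R T T" if "\<pi> \<in> ?P" for \<pi>
    unfolding Y_def using Bl_perm that by simp
  have ExY: "Ex n d R (Y \<pi>) = Ex n d R T" if "\<pi> \<in> ?P" for \<pi>
    unfolding Y_def using Ex_perm that by simp
  have s1: "(\<Sum>\<pi>\<in>?P. Bl n d R (Y \<pi>) M) = c * Bl n d R M M"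
    using Bl_sum_left[of n d R "\<lambda>\<pi>. Y \<pi>" ?P M] unfolding sumY Bl_scal_left by simp
  have s2: "(\<Sum>\<pi>\<in>?P. Bl n d R M (Y \<pi>)) = c * Bl n d R M M"
    using Bl_sum_right[of n d R M "\<lambda>\<pi>. Y \<pi>" ?P] unfolding sumY Bl_scal_right by simp
  have s3: "(\<Sum>\<pi>\<in>?P. Bl n d R (Y \<pi>) (Y \<pi>)) = c * Bl n d R T T"
    using BlY cardP by simp
  have "(\<Sum>\<pi>\<in>?P. Bl n d R (\<lambda>x y. Y \<pi> x y - M x y) (\<lambda>x y. Y \<pi> x y - M x y))
      = (\<Sum>\<pi>\<in>?P. Bl n d R (Y \<pi>) (Y \<pi>)) - (\<Sum>\<pi>\<in>?P. Bl n d R (Y \<pi>) M)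
         - (\<Sum>\<pi>\<in>?P. Bl n d R M (Y \<pi>)) + (\<Sum>\<pi>\<in>?P. Bl n d R M M)"
    unfolding Bl_diff by (simp add: sum_subtractf sum.distrib)
  also have "\<dots> = c * Bl n d R T T - c * Bl n d R M M"
    unfolding s1 s2 s3 using cardP by simp
  finally have key: "(\<Sum>\<pi>\<in>?P. Bl n d R (\<lambda>x y. Y \<pi> x y - M x y) (\<lambda>x y. Y \<pi> x y - M x y))
      = c * (Bl n d R T T - Bl n d R M M)" by (simp add: algebra_simps)
  have "0 \<le> (\<Sum>\<pi>\<in>?P. Re (Bl n d R (\<lambda>x y. Y \<pi> x y - M x y) (\<lambda>x y. Y \<pi> x y - M x y)))"
  proof (intro sum_nonneg Bl_pos)
    fix \<pi> x y assume "\<pi> \<in> ?P" "x \<in> ?N" "y \<in> ?N"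
    then show "Y \<pi> x y - M x y = cnj (Y \<pi> y x - M y x)"
      using hY[of \<pi> x y] hM[of x y] by simp
  qed
  also have "\<dots> = Re (c * (Bl n d R T T - Bl n d R M M))" using key by (simp add: Re_sum[symmetric])
  also have "\<dots> = real (fact n) * Re (Bl n d R T T - Bl n d R M M)" unfolding c_def by simp
  finally have reBl: "Re (Bl n d R M M) \<le> Re (Bl n d R T T)"
    using fact_gt_zero[where 'a=real, of n] by (auto simp: zero_le_mult_iff)
  have "Ex n d R M = Ex n d R (\<lambda>x y. (1 / c) * (\<Sum>\<pi>\<in>?P. Y \<pi> x y))"
    unfolding Mdef ..
  also have "\<dots> = (1 / c) * (\<Sum>\<pi>\<in>?P. Ex n d R (Y \<pi>))" by (rule Ex_sum)
  also have "\<dots> = Ex n d R T" using ExY cardP c0 by simp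
  finally have "Ex n d R M = Ex n d R T" .
  then show ?thesis using reBl unfolding M_def by simp
qed

end


section \<open>Decomposition of positive semidefinite matrices\<close>

definition Qf :: "nat \<Rightarrow> (nat \<Rightarrow> nat \<Rightarrow> complex) \<Rightarrow> (nat \<Rightarrow> complex) \<Rightarrow> complex" where
  "Qf d \<rho> v = (\<Sum>i<d. \<Sum>j<d. cnj (v i) * \<rho> i j * v j)"

lemma sum_if_cond: "(\<Sum>j\<in>A. if P then f j else 0) = (if P then sum f A else 0)"
  by simp

lemma Qf_upd:
  assumes "p < d"
  shows "Qf d \<rho> (\<lambda>i. v i + (if i = p then c else 0)) = Qf d \<rho> v + cnj c * (\<Sum>j<d. \<rho> p j * v j)
     + c * (\<Sum>i<d. cnj (v i) * \<rho> i p) + cnj c * \<rho> p p * c"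
proof -
  have e: "\<And>i j. cnj (v i + (if i = p then c else 0)) * \<rho> i j * (v j + (if j = p then c else 0))
     = cnj (v i) * \<rho> i j * v j + (if j = p then cnj (v i) * \<rho> i j * c else 0)
       + (if i = p then cnj c * \<rho> i j * v j else 0) + (if i = p then (if j = p then cnj c * \<rho> i j * c else 0) else 0)"
    by (auto simp: algebra_simps)
  show ?thesis unfolding Qf_def e using assms
    by (simp add: sum.distrib sum_distrib_left sum_distrib_right algebra_simps if_distrib[of "\<lambda>x. x * _"] sum_if_cond del: sum.If_cases)
qed

definition psd :: "nat \<Rightarrow> (nat \<Rightarrow> nat \<Rightarrow> complex) \<Rightarrow> bool" where
  "psd d \<rho> \<longleftrightarrow> (\<forall>v. 0 \<le> Re (Qf d \<rho> v))"

lemma herm_inst: "hermitian d \<rho> \<Longrightarrow> i < d \<Longrightarrow> j < d \<Longrightarrow> \<rho> i j = cnj (\<rho> j i)"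
  unfolding hermitian_def by blast

lemma Qf_delta:
  assumes "j < d"
  shows "Qf d \<rho> (\<lambda>i. if i = j then 1 else 0) = \<rho> j j"
  using Qf_upd[OF assms, of \<rho> "\<lambda>_. 0" 1] by (simp add: Qf_def)

lemma diag_real:
  assumes "hermitian d \<rho>" "p < d"
  shows "\<rho> p p = complex_of_real (Re (\<rho> p p))"
proof -
  have "\<rho> p p = cnj (\<rho> p p)" using herm_inst[OF assms(1,2,2)] .
  then have "Im (\<rho> p p) = 0" by (metis Im_complex_of_real Reals_cnj_iff complex_is_Real_iff)
  then show ?thesis by (simp add: complex_eq_iff)
qed

lemma diag_nonneg:
  assumes "psd d \<rho>" "p < d"
  shows "0 \<le> Re (\<rho> p p)"
  using assms Qf_delta[OF assms(2), of \<rho>] unfolding psd_def by metis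

lemma re_lemma: "Re (cnj (- (complex_of_real t * a)) * a + (- (complex_of_real t * a)) * cnj a) = - 2 * t * ((Re a)\<^sup>2 + (Im a)\<^sup>2)"
  by (simp add: algebra_simps power2_eq_square)

lemma zero_row:
  assumes "hermitian d \<rho>" "psd d \<rho>" "p < d" "j < d" "\<rho> p p = 0"
  shows "\<rho> p j = 0"
proof (rule ccontr)
  assume ne: "\<rho> p j \<noteq> 0"
  define a where "a = \<rho> p j"
  define e where "e = (\<lambda>i. if i = j then (1::complex) else 0)"
  have Q: "Re (Qf d \<rho> (\<lambda>i. e i + (if i = p then - (complex_of_real t * a) else 0)))
      = Re (\<rho> j j) - 2 * t * ((Re a)\<^sup>2 + (Im a)\<^sup>2)" for t
  proof -
    have "(\<Sum>l<d. \<rho> p l * e l) = (\<Sum>l<d. if l = j then \<rho> p l else 0)"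
      unfolding e_def by (intro sum.cong) auto
    then have s1: "(\<Sum>l<d. \<rho> p l * e l) = a" unfolding a_def using assms(4) by simp
    have "(\<Sum>i<d. cnj (e i) * \<rho> i p) = (\<Sum>i<d. if i = j then \<rho> i p else 0)"
      unfolding e_def by (intro sum.cong) auto
    then have s2: "(\<Sum>i<d. cnj (e i) * \<rho> i p) = cnj a" unfolding a_def using assms(4)
      herm_inst[OF assms(1) assms(4) assms(3)] by simp
    show ?thesis
      unfolding Qf_upd[OF assms(3)] s1 s2 using Qf_delta[OF assms(4), of \<rho>] assms(5) re_lemma[of t a]
      unfolding e_def by simp
  qed
  define t where "t = (\<bar>Re (\<rho> j j)\<bar> + 1) / (2 * ((Re a)\<^sup>2 + (Im a)\<^sup>2))"
  have "0 < (cmod a)\<^sup>2" using ne unfolding a_def by simp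
  then have pos: "0 < (Re a)\<^sup>2 + (Im a)\<^sup>2" by (simp only: cmod_power2)
  have "0 \<le> Re (\<rho> j j) - 2 * t * ((Re a)\<^sup>2 + (Im a)\<^sup>2)" using assms(2) Q[of t] unfolding psd_def by metis
  also have "2 * t * ((Re a)\<^sup>2 + (Im a)\<^sup>2) = \<bar>Re (\<rho> j j)\<bar> + 1" unfolding t_def using pos by (simp add: field_simps)
  finally show False by simp
qed

lemma Qf_schur:
  "Qf d (\<lambda>i j. \<rho> i j - \<rho> i p * \<rho> p j / a) v
    = Qf d \<rho> v - (\<Sum>i<d. cnj (v i) * \<rho> i p) * (\<Sum>j<d. \<rho> p j * v j) / a"
  unfolding Qf_def
  by (simp add: right_diff_distrib left_diff_distrib sum_subtractf sum_product sum_divide_distrib mult.assoc mult.left_commute)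

lemma schur_psd:
  assumes "hermitian d \<rho>" "psd d \<rho>" "p < d" "Re (\<rho> p p) > 0"
  shows "psd d (\<lambda>i j. \<rho> i j - \<rho> i p * \<rho> p j / \<rho> p p)"
  unfolding psd_def
proof
  fix v
  define a where "a = \<rho> p p"
  have ar: "cnj a = a" unfolding a_def using herm_inst[OF assms(1,3,3)] by simp
  have a0: "a \<noteq> 0" unfolding a_def using assms(4) by auto
  define s where "s = (\<Sum>j<d. \<rho> p j * v j)"
  have s': "(\<Sum>i<d. cnj (v i) * \<rho> i p) = cnj s"
    unfolding s_def cnj_sum by (intro sum.cong refl) (simp add: herm_inst[OF assms(1) _ assms(3)])
  define c where "c = - s / a"
  have "Qf d \<rho> (\<lambda>i. v i + (if i = p then c else 0)) = Qf d \<rho> v + cnj c * s + c * cnj s + cnj c * a * c"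
    unfolding Qf_upd[OF assms(3)] s' s_def a_def ..
  also have "\<dots> = Qf d \<rho> v - cnj s * s / a"
    unfolding c_def using ar a0 by (simp add: field_simps)
  also have "\<dots> = Qf d (\<lambda>i j. \<rho> i j - \<rho> i p * \<rho> p j / \<rho> p p) v"
    unfolding Qf_schur s' s_def a_def ..
  finally show "0 \<le> Re (Qf d (\<lambda>i j. \<rho> i j - \<rho> i p * \<rho> p j / \<rho> p p) v)"
    using assms(2) unfolding psd_def by metis
qed


lemma schur_herm:
  assumes "hermitian d \<rho>" "p < d" "Re (\<rho> p p) > 0"
  shows "hermitian d (\<lambda>i j. \<rho> i j - \<rho> i p * \<rho> p j / \<rho> p p)"
  unfolding hermitian_def
proof (intro allI impI)
  fix i j assume "i < d" "j < d"
  have ar: "cnj (\<rho> p p) = \<rho> p p" using herm_inst[OF assms(1,2,2)] by simp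
  show "\<rho> i j - \<rho> i p * \<rho> p j / \<rho> p p = cnj (\<rho> j i - \<rho> j p * \<rho> p i / \<rho> p p)"
    using herm_inst[OF assms(1) \<open>i < d\<close> \<open>j < d\<close>] herm_inst[OF assms(1) \<open>j < d\<close> assms(2)]
      herm_inst[OF assms(1) assms(2) \<open>i < d\<close>] ar
    by (simp add: mult.commute)
qed

lemma chol_aux:
  "c \<le> d \<Longrightarrow> hermitian d \<rho> \<Longrightarrow> psd d \<rho> \<Longrightarrow>
   (\<forall>i<d. \<forall>j<d. (i < d - c \<or> j < d - c) \<longrightarrow> \<rho> i j = 0) \<Longrightarrow>
   \<exists>w. \<forall>i<d. \<forall>j<d. \<rho> i j = (\<Sum>m\<in>{d-c..<d}. w m i * cnj (w m j))"
proof (induction c arbitrary: \<rho>)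
  case 0
  then show ?case by auto
next
  case (Suc c)
  define p where "p = d - Suc c"
  have pd: "p < d" and dc: "d - c = Suc p" using Suc.prems(1) unfolding p_def by auto
  have z: "\<rho> i j = 0" if "i < d" "j < d" "i < p \<or> j < p" for i j
    using Suc.prems(4) that unfolding p_def by blast
  have split: "(\<Sum>m\<in>{p..<d}. f m) = f p + (\<Sum>m\<in>{Suc p..<d}. f m)" for f :: "nat \<Rightarrow> complex"
    using pd by (rule sum.atLeast_Suc_lessThan)
  have dSc: "d - Suc c = p" unfolding p_def ..
  have ap: "\<rho> p p = complex_of_real (Re (\<rho> p p))" by (rule diag_real[OF Suc.prems(2) pd])
  show ?case
  proof (cases "Re (\<rho> p p) = 0")
    case True
    then have a0: "\<rho> p p = 0" using ap by simp
    have r1: "\<rho> p j = 0" if "j < d" for j by (rule zero_row[OF Suc.prems(2,3) pd that a0])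
    have r2: "\<rho> j p = 0" if "j < d" for j using r1[OF that] herm_inst[OF Suc.prems(2) that pd] by simp
    have "\<forall>i<d. \<forall>j<d. (i < d - c \<or> j < d - c) \<longrightarrow> \<rho> i j = 0"
    proof (intro allI impI)
      fix i j assume "i < d" "j < d" "i < d - c \<or> j < d - c"
      then have "i < p \<or> j < p \<or> i = p \<or> j = p" using dc by auto
      then show "\<rho> i j = 0" using z r1 r2 \<open>i < d\<close> \<open>j < d\<close> by auto
    qed
    then obtain w where w: "\<forall>i<d. \<forall>j<d. \<rho> i j = (\<Sum>m\<in>{d-c..<d}. w m i * cnj (w m j))"
      using Suc.IH[OF _ Suc.prems(2,3)] Suc.prems(1) by auto
    define w' where "w' = w(p := (\<lambda>_. 0))"
    have "\<rho> i j = (\<Sum>m\<in>{d - Suc c..<d}. w' m i * cnj (w' m j))" if "i < d" "j < d" for i j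
    proof -
      have "(\<Sum>m\<in>{d - Suc c..<d}. w' m i * cnj (w' m j)) = (\<Sum>m\<in>{Suc p..<d}. w' m i * cnj (w' m j))"
        unfolding dSc split by (simp add: w'_def)
      also have "\<dots> = (\<Sum>m\<in>{Suc p..<d}. w m i * cnj (w m j))"
        by (intro sum.cong refl) (auto simp: w'_def)
      finally show ?thesis using w that dc by simp
    qed
    then show ?thesis by blast
  next
    case False
    then have apos: "Re (\<rho> p p) > 0" using diag_nonneg[OF Suc.prems(3) pd] by simp
    define \<rho>' where "\<rho>' = (\<lambda>i j. \<rho> i j - \<rho> i p * \<rho> p j / \<rho> p p)"
    have h': "hermitian d \<rho>'" unfolding \<rho>'_def by (rule schur_herm[OF Suc.prems(2) pd apos])
    have p': "psd d \<rho>'" unfolding \<rho>'_def by (rule schur_psd[OF Suc.prems(2,3) pd apos])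
    have a0: "\<rho> p p \<noteq> 0" using apos by auto
    have "\<forall>i<d. \<forall>j<d. (i < d - c \<or> j < d - c) \<longrightarrow> \<rho>' i j = 0"
    proof (intro allI impI)
      fix i j assume "i < d" "j < d" "i < d - c \<or> j < d - c"
      then have "i < p \<or> j < p \<or> i = p \<or> j = p" using dc by auto
      then show "\<rho>' i j = 0" unfolding \<rho>'_def using z[OF \<open>i < d\<close> \<open>j < d\<close>] z[OF \<open>i < d\<close> pd] z[OF pd \<open>j < d\<close>] a0
        by auto
    qed
    then obtain w where w: "\<forall>i<d. \<forall>j<d. \<rho>' i j = (\<Sum>m\<in>{d-c..<d}. w m i * cnj (w m j))"
      using Suc.IH[OF _ h' p'] Suc.prems(1) by auto
    define r where "r = complex_of_real (sqrt (Re (\<rho> p p)))"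
    define w' where "w' = w(p := (\<lambda>i. \<rho> i p / r))"
    have "r * r = complex_of_real (Re (\<rho> p p))" unfolding r_def using apos by (simp flip: of_real_mult)
    then have rr: "r * r = \<rho> p p" by (rule trans[OF _ ap[symmetric]])
    have cr: "cnj r = r" unfolding r_def by simp
    have "\<rho> i j = (\<Sum>m\<in>{d - Suc c..<d}. w' m i * cnj (w' m j))" if "i < d" "j < d" for i j
    proof -
      have "(\<Sum>m\<in>{d - Suc c..<d}. w' m i * cnj (w' m j))
          = \<rho> i p / r * cnj (\<rho> j p / r) + (\<Sum>m\<in>{Suc p..<d}. w' m i * cnj (w' m j))"
        unfolding dSc split by (simp add: w'_def)
      also have "(\<Sum>m\<in>{Suc p..<d}. w' m i * cnj (w' m j)) = (\<Sum>m\<in>{Suc p..<d}. w m i * cnj (w m j))"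
        by (intro sum.cong refl) (auto simp: w'_def)
      also have "\<dots> = \<rho>' i j" using w that dc by simp
      also have "\<rho> i p / r * cnj (\<rho> j p / r) = \<rho> i p * \<rho> p j / \<rho> p p"
        using herm_inst[OF Suc.prems(2) pd \<open>j < d\<close>] cr rr[symmetric] by simp
      finally show ?thesis unfolding \<rho>'_def by simp
    qed
    then show ?thesis by blast
  qed
qed

lemma chol:
  assumes "hermitian d \<rho>" "psd d \<rho>"
  shows "\<exists>w. \<forall>i<d. \<forall>j<d. \<rho> i j = (\<Sum>m<d. w m i * cnj (w m j))"
  using chol_aux[of d d \<rho>] assms by (simp add: atLeast0LessThan)


lemma tensor_pow_perm:
  assumes "\<pi> permutes {..<n}"
  shows "tensor_pow n \<rho> (x \<circ> \<pi>) (y \<circ> \<pi>) = tensor_pow n \<rho> x y"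
  unfolding tensor_pow_def using prod.permute[OF assms, of "\<lambda>i. \<rho> (x i) (y i)"] by (simp add: comp_def)

lemma tensor_pow_dec:
  assumes w: "\<And>a b. a < d \<Longrightarrow> b < d \<Longrightarrow> \<rho> a b = (\<Sum>m<d. w m a * cnj (w m b))"
    and "x \<in> idx n d" "y \<in> idx n d"
  shows "tensor_pow n \<rho> y x = (\<Sum>J\<in>idx n d. (\<Prod>i<n. w (J i) (y i)) * cnj (\<Prod>i<n. w (J i) (x i)))"
proof -
  have "tensor_pow n \<rho> y x = (\<Prod>i<n. \<Sum>m<d. w m (y i) * cnj (w m (x i)))"
    unfolding tensor_pow_def using assms(2,3) unfolding idx_def
    by (intro prod.cong refl w) (auto dest: PiE_mem)
  also have "\<dots> = (\<Sum>J\<in>idx n d. \<Prod>i<n. w (J i) (y i) * cnj (w (J i) (x i)))"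
    unfolding idx_def by (rule prod_sum_PiE) auto
  also have "\<dots> = (\<Sum>J\<in>idx n d. (\<Prod>i<n. w (J i) (y i)) * cnj (\<Prod>i<n. w (J i) (x i)))"
    by (simp add: prod.distrib cnj_prod)
  finally show ?thesis .
qed

theorem lemma2p18:
  fixes d n k :: nat and Obs \<rho> :: "nat \<Rightarrow> nat \<Rightarrow> complex"
  assumes "d \<ge> 1"
    and "hermitian d Obs"
    and "density d \<rho>"
    and "n \<ge> 1" and "1 \<le> k" and "k \<le> n"
  shows "Var n d \<rho> (O_k n d k Obs) \<le> Var n d \<rho> (T_k n d k Obs)"
proof -
  let ?R = "tensor_pow n \<rho>"
  let ?T = "T_k n d k Obs"
  have hr: "hermitian d \<rho>" and pr: "psd d \<rho>" using assms(3) unfolding density_def psd_def Qf_def by auto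
  obtain w where w: "\<forall>i<d. \<forall>j<d. \<rho> i j = (\<Sum>m<d. w m i * cnj (w m j))"
    using chol[OF hr pr] by blast
  define W :: op where "W J x = (\<Prod>i<n. w (J i) (x i))" for J x
  have Rinv: "\<And>\<pi> x y. \<pi> permutes {..<n} \<Longrightarrow> x \<in> idx n d \<Longrightarrow> y \<in> idx n d \<Longrightarrow> ?R (x \<circ> \<pi>) (y \<circ> \<pi>) = ?R x y"
    by (rule tensor_pow_perm)
  have Rdec: "\<And>x y. x \<in> idx n d \<Longrightarrow> y \<in> idx n d \<Longrightarrow> ?R y x = (\<Sum>J\<in>idx n d. W J y * cnj (W J x))"
    unfolding W_def using w by (intro tensor_pow_dec) auto
  have hT: "?T x y = cnj (?T y x)" for x y
    unfolding T_k_def adj_def by (simp add: cnj_sum add.commute)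
  have main: "Re (Bl n d ?R (SymOp n ?T) (SymOp n ?T)) - (Re (Ex n d ?R (SymOp n ?T)))\<^sup>2
         \<le> Re (Bl n d ?R ?T ?T) - (Re (Ex n d ?R ?T))\<^sup>2"
    by (rule var_sym[where R="?R" and W=W, OF Rinv Rdec hT]) auto
  have e1: "Bl n d ?R (O_k n d k Obs) (O_k n d k Obs) = Bl n d ?R (SymOp n ?T) (SymOp n ?T)"
    by (rule Bl_cong) (simp add: Sym_T_eq[OF assms(5,6,2)])
  have e2: "Ex n d ?R (O_k n d k Obs) = Ex n d ?R (SymOp n ?T)"
    by (rule Ex_cong) (simp add: Sym_T_eq[OF assms(5,6,2)])
  show ?thesis unfolding Var_eq e1 e2 using main .
qed

end
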